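(* Let $n\ge2$, $c\in(0,\infty)$, and let $\Sigma_n\in\mathbb{R}^{n\times n}$ have entries $(\Sigma_n)_{ij}=\frac{\pi}{i+j}+\frac{4c\pi^2}{(i+1)(j+1)}$ if $c\in(0,1]$ and $(\Sigma_n)_{ij}=\frac{\pi}{c(i+j)}+\frac{4\pi^2}{(i+1)(j+1)}$ if $c\in(1,\infty)$. Then for $c\in(0,1]$ $$\det(\Sigma_n)=\frac{\pi(1+2c\pi)}{2}\prod_{i=2}^n\frac{\pi\prod_{k=1}^{i-1}(i-k)^2}{2i\prod_{k=1}^{i-1}(i+k)^2},$$ and for $c\in(1,\infty)$ $$\det(\Sigma_n)=\frac{\pi(1+2c\pi)}{2c^n}\prod_{i=2}^n\frac{\pi\prod_{k=1}^{i-1}(i-k)^2}{2i\prod_{k=1}^{i-1}(i+k)^2}.$$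
   Context: $\Sigma_n$ is the asymptotic covariance matrix, in the critical regime $t\delta_t^d\to c$, of the vector $(\tilde L_t^{(0)},\dots,\tilde L_t^{(n-1)})$ of normalized length power functionals in dimension $d=2$ for a window of volume $1$. *)

theory Defs
  imports Complex_Main "Jordan_Normal_Form.Determinant"
begin

text \<open>The matrix Sigma_n with 1-based paper indices i, j in 1..n; the
  Jordan_Normal_Form matrix is 0-based, so entry (a,b) is the paper's
  entry (a+1, b+1).\<close>

definition Sigma_entry :: "real \<Rightarrow> nat \<Rightarrow> nat \<Rightarrow> real" where
  "Sigma_entry c i j =
     (if c \<le> 1 then pi / real (i + j) + 4 * c * pi^2 / (real (i + 1) * real (j + 1))
      else pi / (c * real (i + j)) + 4 * pi^2 / (real (i + 1) * real (j + 1)))"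

definition Sigma :: "nat \<Rightarrow> real \<Rightarrow> real mat" where
  "Sigma n c = mat n n (\<lambda>(a, b). Sigma_entry c (a + 1) (b + 1))"

end

theory Submission
  imports Defs
begin


definition cmat :: "(nat \<Rightarrow> real) \<Rightarrow> (nat \<Rightarrow> real) \<Rightarrow> nat \<Rightarrow> real mat" where
  "cmat x y m = mat m m (\<lambda>(i,j). 1 / (x i + y j))"

lemma det_scale:
  fixes a b :: "nat \<Rightarrow> real"
  shows "det (mat n n (\<lambda>(i,j). a i * b j * f i j)) =
     prod a {0..<n} * prod b {0..<n} * det (mat n n (\<lambda>(i,j). f i j))"
proof -
  have "det (mat n n (\<lambda>(i,j). a i * b j * f i j)) =
     (\<Sum>p\<in>{p. p permutes {0..<n}}. signof p * (\<Prod>i=0..<n. a i * b (p i) * f i (p i)))"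
    by (subst det_def'[of _ n]) auto
  also have "\<dots> = (\<Sum>p\<in>{p. p permutes {0..<n}}. prod a {0..<n} * prod b {0..<n} * (signof p * (\<Prod>i=0..<n. f i (p i))))"
  proof (rule sum.cong[OF refl])
    fix p assume "p \<in> {p. p permutes {0..<n}}"
    then have p: "p permutes {0..<n}" by simp
    have "(\<Prod>i=0..<n. b (p i)) = prod b {0..<n}"
      using prod.permute[OF p, of b] by (simp add: comp_def)
    then show "signof p * (\<Prod>i=0..<n. a i * b (p i) * f i (p i)) =
      prod a {0..<n} * prod b {0..<n} * (signof p * (\<Prod>i=0..<n. f i (p i)))"
      by (simp add: prod.distrib)
  qed
  also have "\<dots> = prod a {0..<n} * prod b {0..<n} * det (mat n n (\<lambda>(i,j). f i j))"
    by (subst det_def'[of _ n]) (auto simp: sum_distrib_left)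
  finally show ?thesis .
qed

lemma alg: fixes xi xn yj yn :: real
  assumes "xi+yj\<noteq>0" "xn+yj\<noteq>0" "xi+yn\<noteq>0" "xn+yn\<noteq>0"
  shows "(1/(xi+yj) - 1/(xn+yj)) - (1/(xi+yn) - 1/(xn+yn)) * (1/(xn+yj)) / (1/(xn+yn)) = (xn-xi)/(xi+yn) * ((yn-yj)/(xn+yj)) * (1/(xi+yj))"
  using assms by (simp add: divide_simps) (simp add: algebra_simps)

lemma sum_upto_Suc_split: "(\<Sum>k<Suc n. g k) = (\<Sum>k<n. g k) + g (n::nat)"
  by simp

lemma cauchy_step:
  fixes x y :: "nat \<Rightarrow> real"
  assumes pos: "\<And>i j. x i + y j > 0"
  shows "det (cmat x y (Suc n)) = det (cmat x y n) * (1 / (x n + y n)) *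
     (\<Prod>i=0..<n. (x n - x i) / (x i + y n)) * (\<Prod>j=0..<n. (y n - y j) / (x n + y j))"
proof -
  define a where "a i j = 1 / (x i + y j)" for i j
  define A where "A = cmat x y (Suc n)"
  define E :: "real mat" where "E = mat (Suc n) (Suc n) (\<lambda>(i,j). if i = j then 1 else if j = n then -1 else 0)"
  define F :: "real mat" where "F = mat (Suc n) (Suc n) (\<lambda>(i,j). if i = j then 1 else if i = n then - (a n j / a n n) else 0)"
  define B :: "real mat" where "B = mat (Suc n) (Suc n) (\<lambda>(i,j). if i < n then a i j - a n j else a n j)"
  define M :: "real mat" where "M = mat (Suc n) (Suc n) (\<lambda>(i,j). if j < n then B $$ (i,j) - B $$ (i,n) * a n j / a n n else B $$ (i,n))"
  have A: "A \<in> carrier_mat (Suc n) (Suc n)" and E: "E \<in> carrier_mat (Suc n) (Suc n)"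
    and F: "F \<in> carrier_mat (Suc n) (Suc n)" and Bc: "B \<in> carrier_mat (Suc n) (Suc n)"
    by (auto simp: A_def cmat_def E_def F_def B_def)
  have EA: "E * A = B"
  proof (rule eq_matI)
    fix i j assume i: "i < dim_row B" and j: "j < dim_col B"
    then have i: "i < Suc n" and j: "j < Suc n" by (auto simp: B_def)
    have "(E * A) $$ (i,j) = (\<Sum>k<Suc n. E $$ (i,k) * A $$ (k,j))"
      using i j A E by (simp add: scalar_prod_def atLeast0LessThan)
    also have "\<dots> = (\<Sum>k<n. E $$ (i,k) * A $$ (k,j)) + E $$ (i,n) * A $$ (n,j)"
      by (rule sum_upto_Suc_split)
    also have "(\<Sum>k<n. E $$ (i,k) * A $$ (k,j)) = (\<Sum>k<n. if i = k then a k j else 0)"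
      by (rule sum.cong) (use i j in \<open>auto simp: E_def A_def cmat_def a_def\<close>)
    also have "\<dots> = (if i < n then a i j else 0)" by simp
    also have "E $$ (i,n) = (if i < n then -1 else 1)" using i by (auto simp: E_def)
    also have "A $$ (n,j) = a n j" using j by (simp add: A_def cmat_def a_def)
    also have "(if i < n then a i j else 0) + (if i < n then -1 else 1) * a n j = B $$ (i,j)"
      using i j by (simp add: B_def)
    finally show "(E * A) $$ (i,j) = B $$ (i,j)" .
  qed (use A E in \<open>auto simp: B_def\<close>)
  have BF: "B * F = M"
  proof (rule eq_matI)
    fix i j assume i: "i < dim_row M" and j: "j < dim_col M"
    then have i: "i < Suc n" and j: "j < Suc n" by (auto simp: M_def)
    have "(B * F) $$ (i,j) = (\<Sum>k<Suc n. B $$ (i,k) * F $$ (k,j))"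
      using i j Bc F by (simp add: scalar_prod_def atLeast0LessThan)
    also have "\<dots> = (\<Sum>k<n. B $$ (i,k) * F $$ (k,j)) + B $$ (i,n) * F $$ (n,j)"
      by (rule sum_upto_Suc_split)
    also have "(\<Sum>k<n. B $$ (i,k) * F $$ (k,j)) = (\<Sum>k<n. if k = j then B $$ (i,k) else 0)"
      by (rule sum.cong) (use i j in \<open>auto simp: F_def\<close>)
    also have "\<dots> = (if j < n then B $$ (i,j) else 0)" by simp
    also have "F $$ (n,j) = (if j < n then - (a n j / a n n) else 1)" using j by (auto simp: F_def)
    also have "(if j < n then B $$ (i,j) else 0) + B $$ (i,n) * (if j < n then - (a n j / a n n) else 1) = M $$ (i,j)"
      using i j by (simp add: M_def)
    finally show "(B * F) $$ (i,j) = M $$ (i,j)" .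
  qed (use Bc F in \<open>auto simp: M_def\<close>)
  have detE: "det E = 1"
  proof -
    have "det E = prod_list (diag_mat E)"
      by (rule det_upper_triangular[OF _ E]) (auto simp: upper_triangular_def E_def)
    also have "\<dots> = 1" unfolding prod_list_diag_prod using E by (simp add: E_def)
    finally show ?thesis .
  qed
  have detF: "det F = 1"
  proof -
    have "det F = prod_list (diag_mat F)"
      by (rule det_lower_triangular[OF _ F]) (auto simp: F_def)
    also have "\<dots> = 1" unfolding prod_list_diag_prod using F by (simp add: F_def)
    finally show ?thesis .
  qed
  have ann: "a n n \<noteq> 0" using pos[of n n] by (simp add: a_def)
  have Mc: "M \<in> carrier_mat (Suc n) (Suc n)" by (simp add: M_def)
  have "det A = det M"
  proof -
    have "det M = det (E * A * F)" using EA BF by simp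
    also have "\<dots> = det (E * A) * det F" by (rule det_mult[OF _ F]) (use E A in auto)
    also have "\<dots> = det A" using det_mult[OF E A] detE detF by simp
    finally show ?thesis by simp
  qed
  also have "det M = (\<Sum>j<Suc n. M $$ (n,j) * cofactor M n j)"
    by (rule laplace_expansion_row[OF Mc]) simp
  also have "\<dots> = (\<Sum>j<n. M $$ (n,j) * cofactor M n j) + M $$ (n,n) * cofactor M n n"
    by (rule sum_upto_Suc_split)
  also have "(\<Sum>j<n. M $$ (n,j) * cofactor M n j) = 0"
    by (rule sum.neutral) (use ann in \<open>auto simp: M_def B_def\<close>)
  also have "M $$ (n,n) = a n n" by (simp add: M_def B_def)
  also have "cofactor M n n = det (mat_delete M n n)" by (simp add: cofactor_def)
  also have "mat_delete M n n = mat n n (\<lambda>(i,j). ((x n - x i) / (x i + y n)) * ((y n - y j) / (x n + y j)) * (1 / (x i + y j)))"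
  proof (rule eq_matI)
    fix i j assume "i < dim_row (mat n n (\<lambda>(i,j). ((x n - x i) / (x i + y n)) * ((y n - y j) / (x n + y j)) * (1 / (x i + y j))))"
      "j < dim_col (mat n n (\<lambda>(i,j). ((x n - x i) / (x i + y n)) * ((y n - y j) / (x n + y j)) * (1 / (x i + y j))))"
    then have i: "i < n" and j: "j < n" by auto
    have p1: "x i + y j \<noteq> 0" "x n + y j \<noteq> 0" "x i + y n \<noteq> 0" "x n + y n \<noteq> 0"
      using pos[of i j] pos[of n j] pos[of i n] pos[of n n] by auto
    have "mat_delete M n n $$ (i,j) = M $$ (i,j)" using i j by (simp add: mat_delete_def M_def)
    also have "\<dots> = (a i j - a n j) - (a i n - a n n) * a n j / a n n"
      using i j by (simp add: M_def B_def)
    also have "\<dots> = ((x n - x i) / (x i + y n)) * ((y n - y j) / (x n + y j)) * (1 / (x i + y j))"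
      unfolding a_def by (rule alg[OF p1])
    finally show "mat_delete M n n $$ (i,j) = mat n n (\<lambda>(i,j). ((x n - x i) / (x i + y n)) * ((y n - y j) / (x n + y j)) * (1 / (x i + y j))) $$ (i,j)"
      using i j by simp
  qed (simp_all add: M_def)
  also have "det \<dots> = (\<Prod>i=0..<n. (x n - x i) / (x i + y n)) * (\<Prod>j=0..<n. (y n - y j) / (x n + y j)) * det (cmat x y n)"
    unfolding cmat_def by (rule det_scale)
  finally show ?thesis by (simp add: A_def a_def)
qed


definition Fac :: "nat \<Rightarrow> real" where
  "Fac i = (\<Prod>k = 1..i - 1. (real i - real k)^2) / (2 * real i * (\<Prod>k = 1..i - 1. (real i + real k)^2))"

lemma Fac_Suc: "Fac (Suc n) = (1 / (real n + 1 + (real n + 1))) *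
   (\<Prod>i=0..<n. (real n + 1 - (real i + 1)) / (real i + 1 + (real n + 1))) *
   (\<Prod>j=0..<n. (real n + 1 - (real j + 1)) / (real n + 1 + (real j + 1)))"
proof -
  have 1: "(\<Prod>k = 1..n. (real (Suc n) - real k)^2) = (\<Prod>i<n. (real n - real i)^2)"
    using prod.atLeast1_atMost_eq[of "\<lambda>k. (real (Suc n) - real k)^2" n] by simp
  have 2: "(\<Prod>k = 1..n. (real (Suc n) + real k)^2) = (\<Prod>i<n. (real n + real i + 2)^2)"
    using prod.atLeast1_atMost_eq[of "\<lambda>k. (real (Suc n) + real k)^2" n] by (simp add: add_ac)
  define P where "P = (\<Prod>i<n. real n - real i)"
  define Q where "Q = (\<Prod>i<n. real n + real i + 2)"
  have "Fac (Suc n) = (\<Prod>i<n. (real n - real i)^2) / (2 * (real n + 1) * (\<Prod>i<n. (real n + real i + 2)^2))"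
    unfolding Fac_def using 1 2 by simp
  also have "\<dots> = P^2 / (2 * (real n + 1) * Q^2)"
    unfolding P_def Q_def by (simp add: prod_power_distrib)
  also have "\<dots> = (1 / (real n + 1 + (real n + 1))) * (P / Q) * (P / Q)"
    by (simp add: power2_eq_square)
  finally have main: "Fac (Suc n) = (1 / (real n + 1 + (real n + 1))) * (P / Q) * (P / Q)" .
  have PQ1: "P / Q = (\<Prod>i=0..<n. (real n + 1 - (real i + 1)) / (real i + 1 + (real n + 1)))"
    unfolding P_def Q_def prod_dividef[symmetric] atLeast0LessThan
    by (rule prod.cong) (simp_all add: add_ac)
  have PQ2: "P / Q = (\<Prod>j=0..<n. (real n + 1 - (real j + 1)) / (real n + 1 + (real j + 1)))"
    unfolding P_def Q_def prod_dividef[symmetric] atLeast0LessThan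
    by (rule prod.cong) (simp_all add: add_ac)
  show ?thesis unfolding PQ1[symmetric] PQ2[symmetric] by (rule main)
qed

lemma hdet: "det (cmat (\<lambda>i. real i + 1) (\<lambda>i. real i + 1) n) = (\<Prod>I=1..n. Fac I)"
proof (induction n)
  case 0
  then show ?case by (simp add: cmat_def det_def')
next
  case (Suc n)
  have "det (cmat (\<lambda>i. real i + 1) (\<lambda>i. real i + 1) (Suc n)) =
     det (cmat (\<lambda>i. real i + 1) (\<lambda>i. real i + 1) n) * (1 / (real n + 1 + (real n + 1))) *
   (\<Prod>i=0..<n. (real n + 1 - (real i + 1)) / (real i + 1 + (real n + 1))) *
   (\<Prod>j=0..<n. (real n + 1 - (real j + 1)) / (real n + 1 + (real j + 1)))"
    by (rule cauchy_step) (simp add: add_pos_pos)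
  also have "\<dots> = (\<Prod>I=1..n. Fac I) * Fac (Suc n)"
    unfolding Suc.IH Fac_Suc by (simp only: mult.assoc)
  finally show ?case by (simp add: prod.nat_ivl_Suc' mult.commute)
qed



lemma rank1_det:
  fixes h :: "nat \<Rightarrow> nat \<Rightarrow> real"
  assumes n: "0 < n"
  shows "det (mat n n (\<lambda>(a,b). p * h a b + q * h a 0 * h b 0)) =
     det (mat n n (\<lambda>(a,b). h a b)) * ((p + q * h 0 0) * p ^ (n - 1))"
proof -
  define Hm :: "real mat" where "Hm = mat n n (\<lambda>(a,b). h a b)"
  define G :: "real mat" where "G = mat n n (\<lambda>(k,j). (if k = j then p else 0) + (if k = 0 then q * h j 0 else 0))"
  have Hc: "Hm \<in> carrier_mat n n" and Gc: "G \<in> carrier_mat n n" by (auto simp: Hm_def G_def)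
  have prod: "mat n n (\<lambda>(a,b). p * h a b + q * h a 0 * h b 0) = Hm * G"
  proof (rule eq_matI)
    fix i j assume "i < dim_row (Hm * G)" "j < dim_col (Hm * G)"
    then have i: "i < n" and j: "j < n" using Hc Gc by auto
    have "(Hm * G) $$ (i,j) = (\<Sum>k<n. Hm $$ (i,k) * G $$ (k,j))"
      using i j Hc Gc by (simp add: scalar_prod_def atLeast0LessThan)
    also have "\<dots> = (\<Sum>k<n. (if k = j then p * h i k else 0) + (if k = 0 then q * h i k * h j 0 else 0))"
      by (rule sum.cong) (use i j in \<open>auto simp: Hm_def G_def algebra_simps\<close>)
    also have "\<dots> = p * h i j + q * h i 0 * h j 0"
      using j n by (simp add: sum.distrib)
    finally show "mat n n (\<lambda>(a,b). p * h a b + q * h a 0 * h b 0) $$ (i,j) = (Hm * G) $$ (i,j)"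
      using i j by simp
  qed (use Hc Gc in auto)
  have detG: "det G = (p + q * h 0 0) * p ^ (n - 1)"
  proof -
    have "det G = prod_list (diag_mat G)"
      by (rule det_upper_triangular[OF _ Gc]) (auto simp: upper_triangular_def G_def)
    also have "\<dots> = (\<Prod>k=0..<n. p + (if k = 0 then q * h k 0 else 0))"
      unfolding prod_list_diag_prod using Gc by (intro prod.cong) (auto simp: G_def)
    also have "\<dots> = (p + q * h 0 0) * (\<Prod>k=Suc 0..<n. p + (if k = 0 then q * h k 0 else 0))"
      using n by (simp add: prod.atLeast_Suc_lessThan)
    also have "(\<Prod>k=Suc 0..<n. p + (if k = 0 then q * h k 0 else 0)) = (\<Prod>k=Suc 0..<n. p)"
      by (rule prod.cong) auto
    also have "\<dots> = p ^ (n - 1)" by simp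
    finally show ?thesis .
  qed
  have "det (Hm * G) = det Hm * det G" by (rule det_mult[OF Hc Gc])
  then show ?thesis unfolding prod detG by (simp add: Hm_def)
qed


lemma prod_pi: "(\<Prod>i = 2..n. pi * (\<Prod>k = 1..i - 1. (real i - real k)^2) /
                  (2 * real i * (\<Prod>k = 1..i - 1. (real i + real k)^2))) = pi ^ (n - 1) * (\<Prod>i = 2..n. Fac i)"
proof -
  have "(\<Prod>i = 2..n. pi * (\<Prod>k = 1..i - 1. (real i - real k)^2) /
                  (2 * real i * (\<Prod>k = 1..i - 1. (real i + real k)^2))) = (\<Prod>i = 2..n. pi * Fac i)"
    by (rule prod.cong) (simp_all add: Fac_def)
  also have "\<dots> = pi ^ (n - 1) * (\<Prod>i = 2..n. Fac i)"
    by (simp add: prod.distrib)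
  finally show ?thesis .
qed

lemma prod_Fac: "1 \<le> n \<Longrightarrow> (\<Prod>I=1..n. Fac I) = 1/2 * (\<Prod>i = 2..n. Fac i)"
  by (simp add: prod.atLeast_Suc_atMost Fac_def numeral_2_eq_2)

lemma alg1: fixes P t c :: real shows "1/2 * P * ((pi + 4 * c * pi^2 * (1/2)) * t) = pi * (1 + 2 * c * pi) / 2 * (t * P)"
  by (simp add: algebra_simps power2_eq_square)
lemma alg2: fixes P t c s :: real assumes "c > 0" "s > 0"
  shows "1/2 * P * ((pi / c + 4 * pi^2 * (1/2)) * (t / s)) = pi * (1 + 2 * c * pi) / (2 * (c * s)) * (t * P)"
  using assms by (simp add: field_simps power2_eq_square)
lemma entry1: "c \<le> 1 \<Longrightarrow> Sigma_entry c (Suc a) (Suc b) = pi * (1 / (real a + 1 + (real b + 1))) + (4 * c * pi^2) * (1 / (real a + 1 + (real 0 + 1))) * (1 / (real b + 1 + (real 0 + 1)))"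
  unfolding Sigma_entry_def by (simp add: add_ac)
lemma entry2: "c > 1 \<Longrightarrow> Sigma_entry c (Suc a) (Suc b) = (pi/c) * (1 / (real a + 1 + (real b + 1))) + (4 * pi^2) * (1 / (real a + 1 + (real 0 + 1))) * (1 / (real b + 1 + (real 0 + 1)))"
  unfolding Sigma_entry_def by (simp add: add_ac)

theorem corollary7p12:
  fixes n :: nat and c :: real
  assumes "n \<ge> 2" and "c > 0"
  shows "(c \<le> 1 \<longrightarrow>
           det (Sigma n c) =
             pi * (1 + 2 * c * pi) / 2 *
             (\<Prod>i = 2..n. pi * (\<Prod>k = 1..i - 1. (real i - real k)^2) /
                  (2 * real i * (\<Prod>k = 1..i - 1. (real i + real k)^2))))
       \<and> (c > 1 \<longrightarrow>
           det (Sigma n c) =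
             pi * (1 + 2 * c * pi) / (2 * c ^ n) *
             (\<Prod>i = 2..n. pi * (\<Prod>k = 1..i - 1. (real i - real k)^2) /
                  (2 * real i * (\<Prod>k = 1..i - 1. (real i + real k)^2))))"
proof -
  define h where "h a b = 1 / (real a + 1 + (real b + 1))" for a b :: nat
  have n0: "0 < n" using assms by simp
  have hd: "det (mat n n (\<lambda>(a,b). h a b)) = 1/2 * (\<Prod>i = 2..n. Fac i)"
    using hdet[of n] prod_Fac[of n] assms unfolding cmat_def h_def by simp
  have h00: "h 0 0 = 1/2" by (simp add: h_def)
  have c1: "det (Sigma n c) = pi * (1 + 2 * c * pi) / 2 * (pi ^ (n - 1) * (\<Prod>i = 2..n. Fac i))" if "c \<le> 1"
  proof -
    have "Sigma n c = mat n n (\<lambda>(a,b). pi * h a b + (4 * c * pi^2) * h a 0 * h b 0)"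
      unfolding Sigma_def h_def by (rule eq_matI) (simp_all add: entry1[OF that])
    then have "det (Sigma n c) = 1/2 * (\<Prod>i = 2..n. Fac i) * ((pi + 4 * c * pi^2 * (1/2)) * pi ^ (n - 1))"
      using rank1_det[OF n0, of pi h "4 * c * pi^2"] hd h00 by simp
    then show ?thesis by (simp only: alg1)
  qed
  have c2: "det (Sigma n c) = pi * (1 + 2 * c * pi) / (2 * c ^ n) * (pi ^ (n - 1) * (\<Prod>i = 2..n. Fac i))" if "c > 1"
  proof -
    have "Sigma n c = mat n n (\<lambda>(a,b). (pi / c) * h a b + (4 * pi^2) * h a 0 * h b 0)"
      unfolding Sigma_def h_def by (rule eq_matI) (simp_all add: entry2[OF that])
    then have "det (Sigma n c) = det (mat n n (\<lambda>(a,b). h a b)) * ((pi / c + 4 * pi^2 * h 0 0) * (pi / c) ^ (n - 1))"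
      using rank1_det[OF n0, of "pi / c" h "4 * pi^2"] by (simp only:)
    also have "\<dots> = 1/2 * (\<Prod>i = 2..n. Fac i) * ((pi / c + 4 * pi^2 * (1/2)) * (pi ^ (n - 1) / c ^ (n - 1)))"
      unfolding hd h00 power_divide ..
    also have "\<dots> = pi * (1 + 2 * c * pi) / (2 * (c * c ^ (n - 1))) * (pi ^ (n - 1) * (\<Prod>i = 2..n. Fac i))"
      by (rule alg2[OF assms(2) zero_less_power[OF assms(2)]])
    also have "c * c ^ (n - 1) = c ^ n" using n0 by (cases n) simp_all
    finally show ?thesis .
  qed
  show ?thesis unfolding prod_pi using c1 c2 by simp
qed

end
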